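(* If $G$ is a uniformly dense (finite, simple) graph with at least one edge, then its clique number satisfies $\operatorname{cl}(G)\le 2\rho(G)$.
   Context: For $A\subseteq E$, $c(A)$ is the number of components of $(V,A)$, $\operatorname{rank}(A)=|V|-c(A)$, $\rho(A)=|A|/\operatorname{rank}(A)$, $\rho(G)=\rho(E)$; $G$ is uniformly dense if $\rho(A)\le\rho(G)$ for all nonempty $A\subseteq E$. $\operatorname{cl}(G)$ is the largest number of vertices of a clique (pairwise adjacent vertex set). *)

theory Defs
  imports Complex_Main
begin

definition simple_graph :: "'a set \<Rightarrow> 'a set set \<Rightarrow> bool" where
  "simple_graph V E \<longleftrightarrow> finite V \<and> (\<forall>e\<in>E. e \<subseteq> V \<and> card e = 2)"

definition conn_rel :: "'a set \<Rightarrow> 'a set set \<Rightarrow> ('a \<times> 'a) set" where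
  "conn_rel V A = (Id_on V \<union> {(u,v). u \<in> V \<and> v \<in> V \<and> {u,v} \<in> A})\<^sup>*"

definition num_components :: "'a set \<Rightarrow> 'a set set \<Rightarrow> nat" where
  "num_components V A = card (V // conn_rel V A)"

definition graph_rank :: "'a set \<Rightarrow> 'a set set \<Rightarrow> nat" where
  "graph_rank V A = card V - num_components V A"

definition density :: "'a set \<Rightarrow> 'a set set \<Rightarrow> real" where
  "density V A = real (card A) / real (graph_rank V A)"

definition uniformly_dense :: "'a set \<Rightarrow> 'a set set \<Rightarrow> bool" where
  "uniformly_dense V E \<longleftrightarrow> (\<forall>A. A \<subseteq> E \<and> A \<noteq> {} \<longrightarrow> density V A \<le> density V E)"

definition is_clique :: "'a set \<Rightarrow> 'a set set \<Rightarrow> 'a set \<Rightarrow> bool" where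
  "is_clique V E K \<longleftrightarrow> K \<subseteq> V \<and> (\<forall>u\<in>K. \<forall>v\<in>K. u \<noteq> v \<longrightarrow> {u,v} \<in> E)"

definition clique_number :: "'a set \<Rightarrow> 'a set set \<Rightarrow> nat" where
  "clique_number V E = Max (card ` {K. is_clique V E K})"

end

theory Submission
  imports Defs
begin

lemma clique_exists:
  assumes "finite V"
  shows "\<exists>K. is_clique V E K \<and> card K = clique_number V E"
proof -
  have fin: "finite {K. is_clique V E K}"
    using assms by (rule finite_subset[rotated, OF finite_Pow_iff[THEN iffD2]]) (auto simp: is_clique_def)
  have ne: "{K. is_clique V E K} \<noteq> {}"
    by (auto simp: is_clique_def intro!: exI[of _ "{}"])
  have "clique_number V E \<in> card ` {K. is_clique V E K}"
    unfolding clique_number_def using fin ne by (intro Max_in) auto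
  then show ?thesis by auto
qed

lemma rank_bound:
  assumes finV: "finite V" and KV: "K \<subseteq> V" and k0: "k0 \<in> K" and k1: "k1 \<in> K" and ne: "k0 \<noteq> k1"
    and A: "A = {e. e \<subseteq> K \<and> card e = 2}"
  shows "graph_rank V A \<ge> 1 \<and> graph_rank V A \<le> card K - 1"
proof -
  define S where "S = Id_on V \<union> {(u,v). u \<in> V \<and> v \<in> V \<and> {u,v} \<in> A}"
  define R where "R = S\<^sup>*"
  have RR: "conn_rel V A = R" unfolding conn_rel_def R_def S_def by simp
  have finK: "finite K" using finV KV finite_subset by blast
  have edge: "{u,v} \<in> A" if "u \<in> K" "v \<in> K" "u \<noteq> v" for u v
    using that A by auto
  have single: "R``{v} = {v}" if "v \<in> V - K" for v
  proof -
    have "w = v" if "(v,w) \<in> R" for w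
      using that unfolding R_def
    proof (induction rule: rtrancl_induct)
      case base then show ?case by simp
    next
      case (step y z)
      then have "(v,z) \<in> S" by simp
      then show ?case using \<open>v \<in> V - K\<close> A by (auto simp: S_def)
    qed
    then show ?thesis unfolding R_def by auto
  qed
  have k01: "(k0,k1) \<in> R" "(k1,k0) \<in> R"
    unfolding R_def S_def using edge[OF k0 k1 ne] edge[OF k1 k0 ne[symmetric]] k0 k1 KV by auto
  have same: "R``{k0} = R``{k1}"
  proof -
    have "R``{k1} \<subseteq> R``{k0}" using k01(1) unfolding R_def
      by (auto intro: rtrancl_trans)
    moreover have "R``{k0} \<subseteq> R``{k1}" using k01(2) unfolding R_def
      by (auto intro: rtrancl_trans)
    ultimately show ?thesis by blast
  qed
  have Q: "V // R = (\<lambda>x. R``{x}) ` V" unfolding quotient_def by auto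
  have "V // R = (\<lambda>x. R``{x}) ` (V - {k1})"
    unfolding Q using same k0 k1 KV ne by (auto simp: image_iff)
  then have up: "card (V // R) \<le> card V - 1"
    using card_image_le[of "V - {k1}" "\<lambda>x. R``{x}"] finV k1 KV
    by (simp add: subset_iff)
  have "k1 \<in> R``{k0}" using k01 by auto
  have "k0 \<in> R``{k0}" unfolding R_def by auto
  have nsing: "R``{k0} \<notin> (\<lambda>x. R``{x}) ` (V - K)"
  proof
    assume "R``{k0} \<in> (\<lambda>x. R``{x}) ` (V - K)"
    then obtain x where "x \<in> V - K" "R``{k0} = R``{x}" by auto
    then have "R``{k0} = {x}" using single by auto
    then show False using \<open>k1 \<in> R``{k0}\<close> \<open>k0 \<in> R``{k0}\<close> ne by auto
  qed
  have inj: "inj_on (\<lambda>x. R``{x}) (V - K)"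
    using single by (auto simp: inj_on_def)
  have sub: "insert (R``{k0}) ((\<lambda>x. R``{x}) ` (V - K)) \<subseteq> V // R"
    unfolding Q using k0 KV by auto
  have "card (insert (R``{k0}) ((\<lambda>x. R``{x}) ` (V - K))) = card V - card K + 1"
    using nsing inj finV finK KV by (simp add: card_image card_Diff_subset)
  moreover have "finite (V // R)" unfolding Q using finV by simp
  ultimately have low: "card (V // R) \<ge> card V - card K + 1"
    using card_mono[OF _ sub] by simp
  have cK: "card K \<le> card V" using card_mono[OF finV KV] .
  have "card K \<ge> 2" using k0 k1 ne finK
    by (metis card_2_iff card_mono empty_subsetI insert_subset)
  then show ?thesis
    using up low cK unfolding graph_rank_def num_components_def RR by linarith
qed

theorem proposition3p7:
  fixes V :: "'a set" and E :: "'a set set"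
  assumes "simple_graph V E"
    and "E \<noteq> {}"
    and "uniformly_dense V E"
  shows "real (clique_number V E) \<le> 2 * density V E"
proof -
  have finV: "finite V" using assms(1) by (simp add: simple_graph_def)
  obtain K where K: "is_clique V E K" and cK: "card K = clique_number V E"
    using clique_exists[OF finV] by blast
  have KV: "K \<subseteq> V" using K by (simp add: is_clique_def)
  have finK: "finite K" using finV KV finite_subset by blast
  have dpos: "density V E \<ge> 0" by (simp add: density_def)
  show ?thesis
  proof (cases "card K \<le> 1")
    case True
    show ?thesis
    proof (cases "card K = 0")
      case True then show ?thesis using cK dpos by simp
    next
      case False
      then have "card K = 1" using \<open>card K \<le> 1\<close> by simp
      obtain e where e: "e \<in> E" using assms(2) by blast
      then have "card e = 2" "e \<subseteq> V" using assms(1) by (auto simp: simple_graph_def)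
      then obtain u v where uv: "e = {u,v}" "u \<noteq> v" by (meson card_2_iff)
      have "is_clique V E e" using e uv \<open>e \<subseteq> V\<close> by (auto simp: is_clique_def insert_commute)
      then have "card e \<le> clique_number V E"
        unfolding clique_number_def
        using finV by (intro Max_ge) (auto intro: finite_subset[of _ "card ` Pow V"] simp: is_clique_def)
      then show ?thesis using cK \<open>card e = 2\<close> \<open>card K = 1\<close> by simp
    qed
  next
    case False
    then obtain k0 k1 where k: "k0 \<in> K" "k1 \<in> K" "k0 \<noteq> k1"
      using card_le_Suc0_iff_eq[OF finK] by auto
    define A where "A = {e. e \<subseteq> K \<and> card e = 2}"
    have AE: "A \<subseteq> E"
    proof
      fix e assume "e \<in> A"
      then obtain u v where "e = {u,v}" "u \<noteq> v" "u \<in> K" "v \<in> K"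
        unfolding A_def by (auto simp: card_2_iff)
      then show "e \<in> E" using K by (auto simp: is_clique_def)
    qed
    have Ane: "A \<noteq> {}" proof -
      have "{k0,k1} \<in> A" using k unfolding A_def by auto
      then show ?thesis by auto
    qed
    have cA: "card A = card K choose 2" unfolding A_def using n_subsets[OF finK] by simp
    have rb: "graph_rank V A \<ge> 1" "graph_rank V A \<le> card K - 1"
      using rank_bound[OF finV KV k A_def] by auto
    have two: "2 * (card K choose 2) = card K * (card K - 1)"
    proof -
      have "even (card K * (card K - 1))" by (cases "card K") auto
      then show ?thesis unfolding choose_two by (rule dvd_mult_div_cancel)
    qed
    have "real (card K) / 2 = real (card K choose 2) / real (card K - 1)"
    proof -
      have r: "2 * real (card K choose 2) = real (card K) * real (card K - 1)"
        using arg_cong[OF two, of real] by simp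
      have p: "real (card K - 1) > 0" using False by simp
      show ?thesis using r p by (simp add: field_simps)
    qed
    also have "\<dots> \<le> real (card K choose 2) / real (graph_rank V A)"
      using rb by (intro divide_left_mono) auto
    also have "\<dots> = density V A" by (simp add: density_def cA)
    also have "\<dots> \<le> density V E" using assms(3) AE Ane by (simp add: uniformly_dense_def)
    finally show ?thesis using cK by simp
  qed
qed

end
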